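(* For any first-order $\mathscr L$-theory $T$, the following are equivalent: (1) $T$ is model-complete; (2) $T^*$ is positively model-complete; (3) $T^*$ is geometrically complete.
   Context: $\mathscr L^*$ is $\mathscr L$ plus, for each relation symbol $R$ of $\mathscr L$, a new relation symbol $R^*$ of the same arity; $T^*$ (the atomic Morleyisation of $T$) is $T$ together with all axioms $\forall\bar x(\neg R(\bar x)\leftrightarrow R^*(\bar x))$. $T$ is model-complete if every embedding between models of $T$ is existentially closed (reflects existential sentences with parameters). A homomorphism preserves atomic sentences with parameters; it is an immersion if it reflects every positive existential (prenex existential, negation-free) sentence with parameters; a theory is positively model-complete if every homomorphism between its models is an immersion. A homomorphism $f:A\to B$ is geometrically closed if every sentence $\forall\bar y\,(\bigwedge\Phi(\bar a,\bar y)\to\psi(\bar a,\bar y))$ ($\Phi\cup\{\psi\}$ finite sets of atomic formulas, parameters from $A$) true in $A$ holds in $B$ of $f\bar a$; a theory is geometrically complete if every homomorphism between its models is geometrically closed. *)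

theory Defs
  imports Main
begin

record ('f,'r) lang =
  farity :: "'f \<Rightarrow> nat"
  rarity :: "'r \<Rightarrow> nat"

datatype 'f trm = Var nat | Fn 'f "'f trm list"

datatype ('f,'r) fm =
    FT | FF
  | Rel 'r "'f trm list"
  | Eq "'f trm" "'f trm"
  | Neg "('f,'r) fm"
  | Conj "('f,'r) fm" "('f,'r) fm"
  | Disj "('f,'r) fm" "('f,'r) fm"
  | Ex nat "('f,'r) fm"
  | All nat "('f,'r) fm"

definition Imp :: "('f,'r) fm \<Rightarrow> ('f,'r) fm \<Rightarrow> ('f,'r) fm" where
  "Imp a b = Disj (Neg a) b"

definition Iff :: "('f,'r) fm \<Rightarrow> ('f,'r) fm \<Rightarrow> ('f,'r) fm" where
  "Iff a b = Conj (Imp a b) (Imp b a)"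

definition Exs :: "nat list \<Rightarrow> ('f,'r) fm \<Rightarrow> ('f,'r) fm" where
  "Exs xs \<phi> = foldr Ex xs \<phi>"

definition Alls :: "nat list \<Rightarrow> ('f,'r) fm \<Rightarrow> ('f,'r) fm" where
  "Alls xs \<phi> = foldr All xs \<phi>"

definition Conjs :: "('f,'r) fm list \<Rightarrow> ('f,'r) fm" where
  "Conjs \<Phi> = foldr Conj \<Phi> FT"

primrec wf_trm :: "('f,'r) lang \<Rightarrow> 'f trm \<Rightarrow> bool" where
  "wf_trm L (Var n) = True"
| "wf_trm L (Fn f ts) = (length ts = farity L f \<and> list_all (wf_trm L) ts)"

primrec wf_fm :: "('f,'r) lang \<Rightarrow> ('f,'r) fm \<Rightarrow> bool" where
  "wf_fm L FT = True"
| "wf_fm L FF = True"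
| "wf_fm L (Rel R ts) = (length ts = rarity L R \<and> (\<forall>t\<in>set ts. wf_trm L t))"
| "wf_fm L (Eq s t) = (wf_trm L s \<and> wf_trm L t)"
| "wf_fm L (Neg \<phi>) = wf_fm L \<phi>"
| "wf_fm L (Conj \<phi> \<psi>) = (wf_fm L \<phi> \<and> wf_fm L \<psi>)"
| "wf_fm L (Disj \<phi> \<psi>) = (wf_fm L \<phi> \<and> wf_fm L \<psi>)"
| "wf_fm L (Ex x \<phi>) = wf_fm L \<phi>"
| "wf_fm L (All x \<phi>) = wf_fm L \<phi>"

primrec fv_trm :: "'f trm \<Rightarrow> nat set" where
  "fv_trm (Var n) = {n}"
| "fv_trm (Fn f ts) = \<Union> (set (map fv_trm ts))"

primrec fv :: "('f,'r) fm \<Rightarrow> nat set" where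
  "fv FT = {}"
| "fv FF = {}"
| "fv (Rel R ts) = (\<Union>t\<in>set ts. fv_trm t)"
| "fv (Eq s t) = fv_trm s \<union> fv_trm t"
| "fv (Neg \<phi>) = fv \<phi>"
| "fv (Conj \<phi> \<psi>) = fv \<phi> \<union> fv \<psi>"
| "fv (Disj \<phi> \<psi>) = fv \<phi> \<union> fv \<psi>"
| "fv (Ex x \<phi>) = fv \<phi> - {x}"
| "fv (All x \<phi>) = fv \<phi> - {x}"

definition is_theory :: "('f,'r) lang \<Rightarrow> ('f,'r) fm set \<Rightarrow> bool" where
  "is_theory L T = (\<forall>\<phi>\<in>T. wf_fm L \<phi> \<and> fv \<phi> = {})"

fun is_atomic :: "('f,'r) fm \<Rightarrow> bool" where
  "is_atomic (Rel R ts) = True"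
| "is_atomic (Eq s t) = True"
| "is_atomic _ = False"

fun qfree :: "('f,'r) fm \<Rightarrow> bool" where
  "qfree (Ex x \<phi>) = False"
| "qfree (All x \<phi>) = False"
| "qfree (Neg \<phi>) = qfree \<phi>"
| "qfree (Conj \<phi> \<psi>) = (qfree \<phi> \<and> qfree \<psi>)"
| "qfree (Disj \<phi> \<psi>) = (qfree \<phi> \<and> qfree \<psi>)"
| "qfree _ = True"

fun pos_qfree :: "('f,'r) fm \<Rightarrow> bool" where
  "pos_qfree FT = True"
| "pos_qfree FF = True"
| "pos_qfree (Rel R ts) = True"
| "pos_qfree (Eq s t) = True"
| "pos_qfree (Conj \<phi> \<psi>) = (pos_qfree \<phi> \<and> pos_qfree \<psi>)"
| "pos_qfree (Disj \<phi> \<psi>) = (pos_qfree \<phi> \<and> pos_qfree \<psi>)"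
| "pos_qfree _ = False"

definition existential :: "('f,'r) fm \<Rightarrow> bool" where
  "existential \<phi> = (\<exists>xs \<psi>. \<phi> = Exs xs \<psi> \<and> qfree \<psi>)"

definition pos_existential :: "('f,'r) fm \<Rightarrow> bool" where
  "pos_existential \<phi> = (\<exists>xs \<psi>. \<phi> = Exs xs \<psi> \<and> pos_qfree \<psi>)"

record ('a,'f,'r) struc =
  Dom :: "'a set"
  funs :: "'f \<Rightarrow> 'a list \<Rightarrow> 'a"
  rels :: "'r \<Rightarrow> 'a list \<Rightarrow> bool"

definition is_struct :: "('f,'r) lang \<Rightarrow> ('a,'f,'r) struc \<Rightarrow> bool" where
  "is_struct L A = (Dom A \<noteq> {} \<and>
     (\<forall>f as. length as = farity L f \<and> set as \<subseteq> Dom A \<longrightarrow> funs A f as \<in> Dom A))"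

definition asg :: "('a,'f,'r) struc \<Rightarrow> (nat \<Rightarrow> 'a) \<Rightarrow> bool" where
  "asg A v = (\<forall>n. v n \<in> Dom A)"

primrec eval :: "('a,'f,'r) struc \<Rightarrow> (nat \<Rightarrow> 'a) \<Rightarrow> 'f trm \<Rightarrow> 'a" where
  "eval A v (Var n) = v n"
| "eval A v (Fn f ts) = funs A f (map (eval A v) ts)"

primrec sat :: "('a,'f,'r) struc \<Rightarrow> (nat \<Rightarrow> 'a) \<Rightarrow> ('f,'r) fm \<Rightarrow> bool" where
  "sat A v FT = True"
| "sat A v FF = False"
| "sat A v (Rel R ts) = rels A R (map (eval A v) ts)"
| "sat A v (Eq s t) = (eval A v s = eval A v t)"
| "sat A v (Neg \<phi>) = (\<not> sat A v \<phi>)"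
| "sat A v (Conj \<phi> \<psi>) = (sat A v \<phi> \<and> sat A v \<psi>)"
| "sat A v (Disj \<phi> \<psi>) = (sat A v \<phi> \<or> sat A v \<psi>)"
| "sat A v (Ex x \<phi>) = (\<exists>a\<in>Dom A. sat A (v(x := a)) \<phi>)"
| "sat A v (All x \<phi>) = (\<forall>a\<in>Dom A. sat A (v(x := a)) \<phi>)"

definition is_model :: "('f,'r) lang \<Rightarrow> ('f,'r) fm set \<Rightarrow> ('a,'f,'r) struc \<Rightarrow> bool" where
  "is_model L T A = (is_struct L A \<and> (\<forall>\<phi>\<in>T. \<forall>v. asg A v \<longrightarrow> sat A v \<phi>))"

definition embedding :: "('f,'r) lang \<Rightarrow> ('a,'f,'r) struc \<Rightarrow> ('b,'f,'r) struc \<Rightarrow> ('a \<Rightarrow> 'b) \<Rightarrow> bool" where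
  "embedding L A B h = ((\<forall>a\<in>Dom A. h a \<in> Dom B) \<and> inj_on h (Dom A) \<and>
     (\<forall>f as. length as = farity L f \<and> set as \<subseteq> Dom A \<longrightarrow> h (funs A f as) = funs B f (map h as)) \<and>
     (\<forall>R as. length as = rarity L R \<and> set as \<subseteq> Dom A \<longrightarrow> (rels A R as \<longleftrightarrow> rels B R (map h as))))"

definition ec_embedding :: "('f,'r) lang \<Rightarrow> ('a,'f,'r) struc \<Rightarrow> ('b,'f,'r) struc \<Rightarrow> ('a \<Rightarrow> 'b) \<Rightarrow> bool" where
  "ec_embedding L A B h = (embedding L A B h \<and>
     (\<forall>\<phi> v. wf_fm L \<phi> \<and> existential \<phi> \<and> asg A v \<and> sat B (h \<circ> v) \<phi> \<longrightarrow> sat A v \<phi>))"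

definition hom :: "('f,'r) lang \<Rightarrow> ('a,'f,'r) struc \<Rightarrow> ('b,'f,'r) struc \<Rightarrow> ('a \<Rightarrow> 'b) \<Rightarrow> bool" where
  "hom L A B h = ((\<forall>a\<in>Dom A. h a \<in> Dom B) \<and>
     (\<forall>\<phi> v. wf_fm L \<phi> \<and> is_atomic \<phi> \<and> asg A v \<and> sat A v \<phi> \<longrightarrow> sat B (h \<circ> v) \<phi>))"

definition immersion :: "('f,'r) lang \<Rightarrow> ('a,'f,'r) struc \<Rightarrow> ('b,'f,'r) struc \<Rightarrow> ('a \<Rightarrow> 'b) \<Rightarrow> bool" where
  "immersion L A B h = (hom L A B h \<and>
     (\<forall>\<phi> v. wf_fm L \<phi> \<and> pos_existential \<phi> \<and> asg A v \<and> sat B (h \<circ> v) \<phi> \<longrightarrow> sat A v \<phi>))"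

definition geom_closed :: "('f,'r) lang \<Rightarrow> ('a,'f,'r) struc \<Rightarrow> ('b,'f,'r) struc \<Rightarrow> ('a \<Rightarrow> 'b) \<Rightarrow> bool" where
  "geom_closed L A B h = (hom L A B h \<and>
     (\<forall>ys \<Phi> \<psi> v. (\<forall>\<chi>\<in>set \<Phi>. wf_fm L \<chi> \<and> is_atomic \<chi>) \<and> wf_fm L \<psi> \<and> is_atomic \<psi> \<and> asg A v \<and>
        sat A v (Alls ys (Imp (Conjs \<Phi>) \<psi>)) \<longrightarrow> sat B (h \<circ> v) (Alls ys (Imp (Conjs \<Phi>) \<psi>))))"

section \<open>Completeness notions (models with carrier in type 'a)\<close>

definition model_complete :: "('f,'r) lang \<Rightarrow> ('f,'r) fm set \<Rightarrow> 'a itself \<Rightarrow> bool" where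
  "model_complete L T (_::'a itself) = (\<forall>(A::('a,'f,'r) struc) (B::('a,'f,'r) struc) h.
     is_model L T A \<and> is_model L T B \<and> embedding L A B h \<longrightarrow> ec_embedding L A B h)"

definition pos_model_complete :: "('f,'r) lang \<Rightarrow> ('f,'r) fm set \<Rightarrow> 'a itself \<Rightarrow> bool" where
  "pos_model_complete L T (_::'a itself) = (\<forall>(A::('a,'f,'r) struc) (B::('a,'f,'r) struc) h.
     is_model L T A \<and> is_model L T B \<and> hom L A B h \<longrightarrow> immersion L A B h)"

definition geom_complete :: "('f,'r) lang \<Rightarrow> ('f,'r) fm set \<Rightarrow> 'a itself \<Rightarrow> bool" where
  "geom_complete L T (_::'a itself) = (\<forall>(A::('a,'f,'r) struc) (B::('a,'f,'r) struc) h.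
     is_model L T A \<and> is_model L T B \<and> hom L A B h \<longrightarrow> geom_closed L A B h)"

section \<open>Atomic Morleyisation\<close>

text \<open>Equality is treated as a relation symbol of L, so it also receives a starred
  copy StarEq (binary), interpreted as inequality.\<close>
datatype 'r starred = Orig 'r | Star 'r | StarEq

definition star_lang :: "('f,'r) lang \<Rightarrow> ('f,'r starred) lang" where
  "star_lang L = \<lparr>farity = farity L,
     rarity = (\<lambda>S. case S of Orig R \<Rightarrow> rarity L R | Star R \<Rightarrow> rarity L R | StarEq \<Rightarrow> 2)\<rparr>"

definition star_axiom :: "('f,'r) lang \<Rightarrow> 'r \<Rightarrow> ('f,'r starred) fm" where
  "star_axiom L R = (let xs = map Var [0..<rarity L R] in
     Alls [0..<rarity L R] (Iff (Neg (Rel (Orig R) xs)) (Rel (Star R) xs)))"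

definition star_eq_axiom :: "('f,'r starred) fm" where
  "star_eq_axiom = Alls [0,1] (Iff (Neg (Eq (Var 0) (Var 1))) (Rel StarEq [Var 0, Var 1]))"

definition star_theory :: "('f,'r) lang \<Rightarrow> ('f,'r) fm set \<Rightarrow> ('f,'r starred) fm set" where
  "star_theory L T = map_fm id Orig ` T \<union> range (star_axiom L) \<union> {star_eq_axiom}"

end

theory Submission
  imports Defs
begin

definition vari :: "('a,'f,'r) struc \<Rightarrow> nat list \<Rightarrow> (nat \<Rightarrow> 'a) \<Rightarrow> (nat \<Rightarrow> 'a) \<Rightarrow> bool" where
  "vari A ys v w = ((\<forall>x. x \<notin> set ys \<longrightarrow> w x = v x) \<and> (\<forall>x\<in>set ys. w x \<in> Dom A))"

lemma vari_Nil: "vari A [] v w = (w = v)"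
  by (auto simp: vari_def)

lemma sat_Exs: "sat A v (Exs ys \<phi>) \<longleftrightarrow> (\<exists>w. vari A ys v w \<and> sat A w \<phi>)"
proof (induction ys arbitrary: v)
  case Nil
  then show ?case by (simp add: Exs_def vari_Nil)
next
  case (Cons y ys)
  have "sat A v (Exs (y#ys) \<phi>) \<longleftrightarrow> (\<exists>a\<in>Dom A. sat A (v(y:=a)) (Exs ys \<phi>))"
    by (simp add: Exs_def)
  also have "\<dots> \<longleftrightarrow> (\<exists>w. vari A (y#ys) v w \<and> sat A w \<phi>)"
  proof
    assume "\<exists>a\<in>Dom A. sat A (v(y:=a)) (Exs ys \<phi>)"
    then obtain a where a: "a \<in> Dom A" "sat A (v(y:=a)) (Exs ys \<phi>)" by blast
    then obtain w where w: "vari A ys (v(y:=a)) w" "sat A w \<phi>" using Cons.IH by blast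
    have "vari A (y#ys) v w" unfolding vari_def
    proof (intro conjI allI impI ballI)
      fix x assume "x \<notin> set (y#ys)"
      then show "w x = v x" using w(1) unfolding vari_def by simp
    next
      fix x assume x: "x \<in> set (y#ys)"
      show "w x \<in> Dom A"
      proof (cases "x \<in> set ys")
        case True then show ?thesis using w(1) unfolding vari_def by blast
      next
        case False then have "x = y" using x by simp
        then show ?thesis using w(1) a(1) False unfolding vari_def by simp
      qed
    qed
    then show "\<exists>w. vari A (y#ys) v w \<and> sat A w \<phi>" using w(2) by blast
  next
    assume "\<exists>w. vari A (y#ys) v w \<and> sat A w \<phi>"
    then obtain w where w: "vari A (y#ys) v w" "sat A w \<phi>" by blast
    have "vari A ys (v(y:= w y)) w" using w(1) unfolding vari_def by simp
    then have "sat A (v(y:= w y)) (Exs ys \<phi>)" using w(2) Cons.IH by blast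
    moreover have "w y \<in> Dom A" using w(1) unfolding vari_def by simp
    ultimately show "\<exists>a\<in>Dom A. sat A (v(y:=a)) (Exs ys \<phi>)" by blast
  qed
  finally show ?case .
qed

lemma Alls_Exs: "sat A v (Alls ys \<phi>) \<longleftrightarrow> \<not> sat A v (Exs ys (Neg \<phi>))"
proof (induction ys arbitrary: v)
  case Nil then show ?case by (simp add: Exs_def Alls_def)
next
  case (Cons y ys)
  have "sat A v (Alls (y#ys) \<phi>) = (\<forall>a\<in>Dom A. sat A (v(y:=a)) (Alls ys \<phi>))" by (simp add: Alls_def)
  also have "\<dots> = (\<forall>a\<in>Dom A. \<not> sat A (v(y:=a)) (Exs ys (Neg \<phi>)))" using Cons.IH by blast
  also have "\<dots> = (\<not> sat A v (Exs (y#ys) (Neg \<phi>)))" by (simp add: Exs_def)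
  finally show ?case .
qed

lemma sat_Alls: "sat A v (Alls ys \<phi>) \<longleftrightarrow> (\<forall>w. vari A ys v w \<longrightarrow> sat A w \<phi>)"
proof -
  have "sat A v (Alls ys \<phi>) \<longleftrightarrow> \<not> sat A v (Exs ys (Neg \<phi>))" by (rule Alls_Exs)
  then show ?thesis unfolding sat_Exs by simp
qed

lemma vari_asg: "asg A v \<Longrightarrow> vari A ys v w \<Longrightarrow> asg A w"
  unfolding asg_def vari_def by metis

lemma vari_hom: "\<forall>a\<in>Dom A. h a \<in> Dom B \<Longrightarrow> asg A v \<Longrightarrow> vari A ys v w \<Longrightarrow> vari B ys (h \<circ> v) (h \<circ> w)"
  by (auto simp: vari_def)

lemma wf_Exs[simp]: "wf_fm L (Exs xs \<phi>) = wf_fm L \<phi>"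
  by (induction xs) (auto simp: Exs_def)

lemma sat_Conjs[simp]: "sat A v (Conjs \<Phi>) \<longleftrightarrow> (\<forall>\<chi>\<in>set \<Phi>. sat A v \<chi>)"
  by (induction \<Phi>) (auto simp: Conjs_def)

lemma wf_Conjs[simp]: "wf_fm L (Conjs \<Phi>) \<longleftrightarrow> (\<forall>\<chi>\<in>set \<Phi>. wf_fm L \<chi>)"
  by (induction \<Phi>) (auto simp: Conjs_def)

lemma sat_Imp[simp]: "sat A v (Imp a b) \<longleftrightarrow> (sat A v a \<longrightarrow> sat A v b)"
  by (simp add: Imp_def)
lemma sat_Iff[simp]: "sat A v (Iff a b) \<longleftrightarrow> (sat A v a \<longleftrightarrow> sat A v b)"
  by (auto simp add: Iff_def)

lemma eval_funs: "funs A = funs B \<Longrightarrow> eval A v t = eval B v t"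
  by (induction t) (auto cong: map_cong)

lemma wf_trm_star[simp]: "wf_trm (star_lang L) t = wf_trm L t"
  by (induction t) (auto simp: star_lang_def list_all_iff)

lemma eval_dom: "is_struct L A \<Longrightarrow> asg A v \<Longrightarrow> wf_trm L t \<Longrightarrow> eval A v t \<in> Dom A"
proof (induction t)
  case (Var n) then show ?case by (simp add: asg_def)
next
  case (Fn f ts)
  have "set (map (eval A v) ts) \<subseteq> Dom A" using Fn by (auto simp: list_all_iff)
  moreover have "length (map (eval A v) ts) = farity L f" using Fn by simp
  ultimately show ?case using Fn(2) unfolding is_struct_def by simp
qed

lemma asg_ex: "Dom A \<noteq> {} \<Longrightarrow> set as \<subseteq> Dom A \<Longrightarrow> \<exists>v. asg A v \<and> map v [0..<length as] = as"
proof -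
  assume "Dom A \<noteq> {}" "set as \<subseteq> Dom A"
  then obtain d where d: "d \<in> Dom A" by blast
  let ?v = "\<lambda>i. if i < length as then as ! i else d"
  have "asg A ?v" using d \<open>set as \<subseteq> Dom A\<close> by (auto simp: asg_def)
  moreover have "map ?v [0..<length as] = as" by (rule nth_equalityI) auto
  ultimately show ?thesis by blast
qed

definition red :: "('a,'f,'r starred) struc \<Rightarrow> ('a,'f,'r) struc" where
  "red B = \<lparr>Dom = Dom B, funs = funs B, rels = (\<lambda>R. rels B (Orig R))\<rparr>"

definition expd :: "('a,'f,'r) struc \<Rightarrow> ('a,'f,'r starred) struc" where
  "expd A = \<lparr>Dom = Dom A, funs = funs A, rels = (\<lambda>S. case S of Orig R \<Rightarrow> rels A R
     | Star R \<Rightarrow> (\<lambda>as. \<not> rels A R as) | StarEq \<Rightarrow> (\<lambda>as. as!0 \<noteq> as!1))\<rparr>"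

lemma red_simps[simp]: "Dom (red B) = Dom B" "funs (red B) = funs B" "rels (red B) R = rels B (Orig R)"
  by (auto simp: red_def)
lemma expd_simps[simp]: "Dom (expd A) = Dom A" "funs (expd A) = funs A"
  "rels (expd A) (Orig R) = rels A R" "rels (expd A) (Star R) as = (\<not> rels A R as)"
  "rels (expd A) StarEq as = (as!0 \<noteq> as!1)"
  by (auto simp: expd_def)

lemma eval_red[simp]: "eval (red B) v = eval B v" by (rule ext, rule eval_funs) simp
lemma eval_expd[simp]: "eval (expd B) v = eval B v" by (rule ext, rule eval_funs) simp
lemma asg_red[simp]: "asg (red B) v = asg B v" by (simp add: asg_def)
lemma asg_expd[simp]: "asg (expd B) v = asg B v" by (simp add: asg_def)

lemma sat_red: "sat (red B) v \<phi> = sat B v (map_fm id Orig \<phi>)"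
  by (induction \<phi> arbitrary: v) (auto simp: trm.map_id0)
lemma sat_expd_Orig: "sat (expd A) v (map_fm id Orig \<phi>) = sat A v \<phi>"
  by (induction \<phi> arbitrary: v) (auto simp: trm.map_id0)

lemma struct_red[simp]: "is_struct L (red B) = is_struct (star_lang L) B"
  by (simp add: is_struct_def star_lang_def)
lemma struct_expd[simp]: "is_struct (star_lang L) (expd B) = is_struct L B"
  by (simp add: is_struct_def star_lang_def)

lemma model_red: "is_model (star_lang L) (star_theory L T) B \<Longrightarrow> is_model L T (red B)"
  by (auto simp: is_model_def star_theory_def sat_red)

lemma model_expd: "is_model L T A \<Longrightarrow> is_model (star_lang L) (star_theory L T) (expd A)"
proof -
  assume A: "is_model L T A"
  { fix R v
    have "sat (expd A) v (star_axiom L R)"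
      by (auto simp: star_axiom_def sat_Alls Let_def) }
  moreover
  { fix v
    have "sat (expd A) v star_eq_axiom"
      by (auto simp: star_eq_axiom_def sat_Alls) }
  ultimately show ?thesis using A
    by (auto simp: is_model_def star_theory_def sat_expd_Orig)
qed

lemma Alls_inst: "asg A v \<Longrightarrow> sat A v (Alls ys \<phi>) \<Longrightarrow> sat A v \<phi>"
  unfolding sat_Alls vari_def asg_def by blast

lemma model_ne: "is_model L T B \<Longrightarrow> Dom B \<noteq> {}"
  by (simp add: is_model_def is_struct_def)

lemma star_fact_rel:
  fixes L :: "('f,'r) lang"
  assumes B: "is_model (star_lang L) (star_theory L T) B"
    and as: "length as = rarity L R" "set as \<subseteq> Dom B"
  shows "rels B (Star R) as \<longleftrightarrow> \<not> rels B (Orig R) as"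
proof -
  obtain v where v: "asg B v" "map v [0..<length as] = as" using asg_ex[OF model_ne[OF B] as(2)] by blast
  have "sat B v (star_axiom L R)" using B v by (auto simp: is_model_def star_theory_def)
  then have "sat B v (Iff (Neg (Rel (Orig R) (map Var [0..<rarity L R]))) (Rel (Star R) (map Var [0..<rarity L R])))"
    unfolding star_axiom_def Let_def using Alls_inst v(1) by blast
  then show ?thesis using v as by (simp add: comp_def)
qed

lemma star_fact_eq:
  fixes L :: "('f,'r) lang"
  assumes B: "is_model (star_lang L) (star_theory L T) B"
    and ab: "a \<in> Dom B" "b \<in> Dom B"
  shows "rels B StarEq [a,b] \<longleftrightarrow> a \<noteq> b"
proof -
  obtain v where v: "asg B v" "map v [0..<length [a,b]] = [a,b]" using asg_ex[OF model_ne[OF B], of "[a,b]"] ab by auto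
  have "sat B v star_eq_axiom" using B v by (auto simp: is_model_def star_theory_def)
  then have "sat B v (Iff (Neg (Eq (Var 0) (Var 1))) (Rel StarEq [Var 0, Var 1]))"
    unfolding star_eq_axiom_def using Alls_inst v(1) by blast
  moreover have "v 0 = a" "v 1 = b" using v(2) by (auto simp: upt_rec)
  ultimately show ?thesis by auto
qed

lemma rarity_star[simp]: "rarity (star_lang L) (Orig R) = rarity L R"
  "rarity (star_lang L) (Star R) = rarity L R" "rarity (star_lang L) StarEq = 2"
  "farity (star_lang L) = farity L"
  by (auto simp: star_lang_def)

fun un :: "('f,'r starred) fm \<Rightarrow> ('f,'r) fm" where
  "un FT = FT" | "un FF = FF"
| "un (Rel (Orig R) ts) = Rel R ts"
| "un (Rel (Star R) ts) = Neg (Rel R ts)"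
| "un (Rel StarEq ts) = Neg (Eq (ts!0) (ts!1))"
| "un (Eq s t) = Eq s t"
| "un (Neg \<phi>) = Neg (un \<phi>)"
| "un (Conj a b) = Conj (un a) (un b)"
| "un (Disj a b) = Disj (un a) (un b)"
| "un (Ex x \<phi>) = Ex x (un \<phi>)"
| "un (All x \<phi>) = All x (un \<phi>)"

lemma len2: "length ts = 2 \<Longrightarrow> ts = [ts!0, ts!1]"
  by (cases ts; cases "tl ts") auto

lemma asg_upd: "asg A w \<Longrightarrow> a \<in> Dom A \<Longrightarrow> asg A (w(x:=a))"
  by (simp add: asg_def)

lemma sat_un:
  fixes L :: "('f,'r) lang"
  assumes B: "is_model (star_lang L) (star_theory L T) B"
  shows "asg B w \<Longrightarrow> wf_fm (star_lang L) \<phi> \<Longrightarrow> sat B w \<phi> = sat (red B) w (un \<phi>)"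
proof (induction \<phi> arbitrary: w)
  case (Rel S ts)
  have st: "is_struct L (red B)" using B by (simp add: is_model_def)
  have dom: "set (map (eval B w) ts) \<subseteq> Dom B" using Rel eval_dom[OF st, of w] by auto
  show ?case
  proof (cases S)
    case (Star R)
    then show ?thesis using Rel star_fact_rel[OF B, of "map (eval B w) ts" R] dom by simp
  next
    case StarEq
    then have "length ts = 2" using Rel by simp
    then have "ts = [ts!0, ts!1]" by (rule len2)
    then obtain s t where ts: "ts = [s,t]" by metis
    have "eval B w s \<in> Dom B" "eval B w t \<in> Dom B" using dom ts by auto
    then show ?thesis using StarEq ts star_fact_eq[OF B, of "eval B w s" "eval B w t"] by simp
  qed simp
qed (auto intro: asg_upd)

lemma wf_un: "wf_fm (star_lang L) \<phi> \<Longrightarrow> wf_fm L (un \<phi>)"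
proof (induction \<phi>)
  case (Rel S ts)
  show ?case
  proof (cases S)
    case StarEq
    then have l: "length ts = 2" using Rel by simp
    then have "ts!0 \<in> set ts" "ts!1 \<in> set ts" by auto
    then show ?thesis using Rel StarEq by auto
  qed (use Rel in auto)
qed auto

lemma qfree_un: "qfree \<phi> \<Longrightarrow> qfree (un \<phi>)"
proof (induction \<phi>)
  case (Rel S ts)
  then show ?case by (cases S) auto
qed auto

lemma pos_qfree_qfree: "pos_qfree \<phi> \<Longrightarrow> qfree \<phi>"
  by (induction \<phi>) auto

lemma un_Exs: "un (Exs xs \<phi>) = Exs xs (un \<phi>)"
  by (induction xs) (auto simp: Exs_def)

fun pp :: "('f,'r) fm \<Rightarrow> ('f,'r starred) fm" and nn :: "('f,'r) fm \<Rightarrow> ('f,'r starred) fm" where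
  "pp FT = FT" | "pp FF = FF" | "pp (Rel R ts) = Rel (Orig R) ts" | "pp (Eq s t) = Eq s t"
| "pp (Neg \<phi>) = nn \<phi>" | "pp (Conj a b) = Conj (pp a) (pp b)" | "pp (Disj a b) = Disj (pp a) (pp b)"
| "pp (Ex x \<phi>) = Ex x (pp \<phi>)" | "pp (All x \<phi>) = All x (pp \<phi>)"
| "nn FT = FF" | "nn FF = FT" | "nn (Rel R ts) = Rel (Star R) ts" | "nn (Eq s t) = Rel StarEq [s,t]"
| "nn (Neg \<phi>) = pp \<phi>" | "nn (Conj a b) = Disj (nn a) (nn b)" | "nn (Disj a b) = Conj (nn a) (nn b)"
| "nn (Ex x \<phi>) = All x (nn \<phi>)" | "nn (All x \<phi>) = Ex x (nn \<phi>)"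

lemma sat_pp: "(sat (expd A) v (pp \<phi>) = sat A v \<phi>) \<and> (sat (expd A) v (nn \<phi>) = (\<not> sat A v \<phi>))"
  by (induction \<phi> arbitrary: v) auto

lemma wf_pp: "wf_fm L \<phi> \<Longrightarrow> wf_fm (star_lang L) (pp \<phi>) \<and> wf_fm (star_lang L) (nn \<phi>)"
  by (induction \<phi>) auto

lemma qfree_pp: "qfree \<phi> \<Longrightarrow> pos_qfree (pp \<phi>) \<and> pos_qfree (nn \<phi>)"
  by (induction \<phi>) auto

lemma pp_Exs: "pp (Exs xs \<phi>) = Exs xs (pp \<phi>)"
  by (induction xs) (auto simp: Exs_def)

lemma map_eval_Var[simp]: "map (eval X w) (map Var xs) = map w xs"
  by (induction xs) auto
lemma eval_o_Var[simp]: "eval X w \<circ> Var = w"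
  by (rule ext) simp

lemma hom_at: "hom L A B h \<Longrightarrow> wf_fm L \<phi> \<Longrightarrow> is_atomic \<phi> \<Longrightarrow> asg A w \<Longrightarrow> sat A w \<phi> \<Longrightarrow> sat B (h \<circ> w) \<phi>"
  unfolding hom_def by blast

lemma hom_rel:
  fixes L :: "('f,'r) lang"
  assumes h: "hom L A B h" and ne: "Dom A \<noteq> {}" and as: "length as = rarity L S" "set as \<subseteq> Dom A"
    and r: "rels A S as"
  shows "rels B S (map h as)"
proof -
  obtain v where v: "asg A v" "map v [0..<length as] = as" using asg_ex[OF ne as(2)] by blast
  let ?\<phi> = "Rel S (map Var [0..<length as]) :: ('f,'r) fm"
  have wf: "wf_fm L ?\<phi>" using as by simp
  have sa: "sat A v ?\<phi>" using v r by simp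
  have "sat B (h \<circ> v) ?\<phi>" using hom_at[OF h wf _ v(1) sa] by simp
  moreover have "map (h \<circ> v) [0..<length as] = map h as" using v(2) by (metis map_map)
  ultimately show ?thesis by simp
qed

lemma hom_fun:
  fixes L :: "('f,'r) lang"
  assumes h: "hom L A B h" and st: "is_struct L A" and as: "length as = farity L f" "set as \<subseteq> Dom A"
  shows "h (funs A f as) = funs B f (map h as)"
proof -
  have ne: "Dom A \<noteq> {}" using st by (simp add: is_struct_def)
  have fd: "funs A f as \<in> Dom A" using st as by (simp add: is_struct_def)
  obtain v where v: "asg A v" "map v [0..<length (as @ [funs A f as])] = as @ [funs A f as]"
    using asg_ex[OF ne, of "as @ [funs A f as]"] as fd by auto
  have v1: "map v [0..<length as] = as" "v (length as) = funs A f as" using v(2)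
    by (simp_all add: upt_Suc_append del: upt_Suc)
  let ?\<phi> = "Eq (Fn f (map Var [0..<length as])) (Var (length as)) :: ('f,'r) fm"
  have wf: "wf_fm L ?\<phi>" using as by (simp add: list_all_iff)
  have sa: "sat A v ?\<phi>" using v1 by simp
  have "sat B (h \<circ> v) ?\<phi>" using hom_at[OF h wf _ v(1) sa] by simp
  moreover have "map (h \<circ> v) [0..<length as] = map h as" using v1 by (metis map_map)
  ultimately show ?thesis using v1 by simp
qed

lemma eval_comm:
  assumes fc: "\<forall>f as. length as = farity L f \<and> set as \<subseteq> Dom A \<longrightarrow> h (funs A f as) = funs B f (map h as)"
    and st: "is_struct L A" and v: "asg A v"
  shows "wf_trm L t \<Longrightarrow> h (eval A v t) = eval B (h \<circ> v) t"
proof (induction t)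
  case (Fn f ts)
  have "set (map (eval A v) ts) \<subseteq> Dom A" using Fn eval_dom[OF st v] by (auto simp: list_all_iff)
  then have "h (eval A v (Fn f ts)) = funs B f (map h (map (eval A v) ts))" using fc Fn by simp
  also have "map h (map (eval A v) ts) = map (eval B (h \<circ> v)) ts" using Fn by (auto simp: list_all_iff comp_def)
  finally show ?case by (simp add: comp_def)
qed simp

lemma hom_embedding:
  fixes L :: "('f,'r) lang"
  assumes A: "is_model (star_lang L) (star_theory L T) A"
    and B: "is_model (star_lang L) (star_theory L T) B"
    and h: "hom (star_lang L) A B h"
  shows "embedding L (red A) (red B) h"
proof -
  have stA: "is_struct (star_lang L) A" using A by (simp add: is_model_def)
  have ne: "Dom A \<noteq> {}" using model_ne[OF A] .
  have hd: "\<forall>a\<in>Dom A. h a \<in> Dom B" using h by (simp add: hom_def)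
  have inj: "inj_on h (Dom A)"
  proof (rule inj_onI, rule ccontr)
    fix a b assume ab: "a \<in> Dom A" "b \<in> Dom A" "h a = h b" "a \<noteq> b"
    then have "rels A StarEq [a,b]" using star_fact_eq[OF A] by simp
    then have "rels B StarEq [h a, h b]" using hom_rel[OF h ne, of "[a,b]" StarEq] ab(1,2) by simp
    then show False using star_fact_eq[OF B, of "h a" "h b"] hd ab by simp
  qed
  have fc: "\<forall>f as. length as = farity L f \<and> set as \<subseteq> Dom A \<longrightarrow> h (funs A f as) = funs B f (map h as)"
    using hom_fun[OF h stA] by simp
  have rc: "\<forall>R as. length as = rarity L R \<and> set as \<subseteq> Dom A \<longrightarrow> (rels A (Orig R) as \<longleftrightarrow> rels B (Orig R) (map h as))"
  proof (intro allI impI iffI)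
    fix R as assume as: "length as = rarity L R \<and> set as \<subseteq> Dom A"
    { assume "rels A (Orig R) as"
      then show "rels B (Orig R) (map h as)" using hom_rel[OF h ne, of as "Orig R"] as by simp }
    { assume r: "rels B (Orig R) (map h as)"
      show "rels A (Orig R) as"
      proof (rule ccontr)
        assume "\<not> rels A (Orig R) as"
        then have "rels A (Star R) as" using star_fact_rel[OF A] as by blast
        then have "rels B (Star R) (map h as)" using hom_rel[OF h ne, of as "Star R"] as by simp
        moreover have "set (map h as) \<subseteq> Dom B" using as hd by auto
        ultimately show False using star_fact_rel[OF B, of "map h as" R] as r by simp
      qed }
  qed
  show ?thesis unfolding embedding_def using hd inj fc rc by simp
qed

lemma mc_pmc:
  fixes L :: "('f,'r) lang"
  assumes mc: "model_complete L T TYPE('a)"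
  shows "pos_model_complete (star_lang L) (star_theory L T) TYPE('a)"
  unfolding pos_model_complete_def
proof (intro allI impI)
  fix A B :: "('a,'f,'r starred) struc" and h
  assume abh: "is_model (star_lang L) (star_theory L T) A \<and> is_model (star_lang L) (star_theory L T) B \<and> hom (star_lang L) A B h"
  then have A: "is_model (star_lang L) (star_theory L T) A" and B: "is_model (star_lang L) (star_theory L T) B"
    and h: "hom (star_lang L) A B h" by auto
  have hd: "\<forall>a\<in>Dom A. h a \<in> Dom B" using h by (simp add: hom_def)
  have ec: "ec_embedding L (red A) (red B) h"
    using mc hom_embedding[OF A B h] model_red[OF A] model_red[OF B] unfolding model_complete_def by blast
  show "immersion (star_lang L) A B h"
    unfolding immersion_def
  proof (intro conjI h allI impI)
    fix \<phi> v assume a: "wf_fm (star_lang L) \<phi> \<and> pos_existential \<phi> \<and> asg A v \<and> sat B (h \<circ> v) \<phi>"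
    then obtain xs \<psi> where \<phi>: "\<phi> = Exs xs \<psi>" "pos_qfree \<psi>" unfolding pos_existential_def by blast
    have asgB: "asg B (h \<circ> v)" using a hd by (auto simp: asg_def)
    have "sat (red B) (h \<circ> v) (un \<phi>)" using sat_un[OF B asgB] a by blast
    moreover have "existential (un \<phi>)" unfolding existential_def \<phi> un_Exs
      using qfree_un pos_qfree_qfree \<phi>(2) by blast
    moreover have "wf_fm L (un \<phi>)" using wf_un a by blast
    ultimately have "sat (red A) v (un \<phi>)" using ec a unfolding ec_embedding_def by auto
    then show "sat A v \<phi>" using sat_un[OF A] a by blast
  qed
qed

lemma emb_hom:
  fixes L :: "('f,'r) lang"
  assumes A: "is_model L T A" and e: "embedding L A B h"
  shows "hom (star_lang L) (expd A) (expd B) h"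
proof -
  have st: "is_struct L A" using A by (simp add: is_model_def)
  have hd: "\<forall>a\<in>Dom A. h a \<in> Dom B" and inj: "inj_on h (Dom A)"
    and fc: "\<forall>f as. length as = farity L f \<and> set as \<subseteq> Dom A \<longrightarrow> h (funs A f as) = funs B f (map h as)"
    and rc: "\<forall>R as. length as = rarity L R \<and> set as \<subseteq> Dom A \<longrightarrow> (rels A R as \<longleftrightarrow> rels B R (map h as))"
    using e unfolding embedding_def by auto
  show ?thesis unfolding hom_def
  proof (intro conjI allI impI)
    show "\<forall>a\<in>Dom (expd A). h a \<in> Dom (expd B)" using hd by simp
  next
    fix \<phi> :: "('f,'r starred) fm" and v
    assume a: "wf_fm (star_lang L) \<phi> \<and> is_atomic \<phi> \<and> asg (expd A) v \<and> sat (expd A) v \<phi>"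
    then have v: "asg A v" by simp
    have ev: "\<And>t. wf_trm L t \<Longrightarrow> h (eval A v t) = eval B (h \<circ> v) t"
      using eval_comm[OF fc st v] by blast
    have ed: "\<And>t. wf_trm L t \<Longrightarrow> eval A v t \<in> Dom A" using eval_dom[OF st v] by blast
    show "sat (expd B) (h \<circ> v) \<phi>"
    proof (cases \<phi>)
      case (Rel S ts)
      have m: "map (eval B (h \<circ> v)) ts = map h (map (eval A v) ts)" using a Rel ev by auto
      have d: "set (map (eval A v) ts) \<subseteq> Dom A" using a Rel ed by auto
      show ?thesis
      proof (cases S)
        case (Orig R)
        have l: "length (map (eval A v) ts) = rarity L R" using a Rel Orig by simp
        have "rels A R (map (eval A v) ts)" using a Rel Orig by simp
        then have "rels B R (map h (map (eval A v) ts))" using rc[rule_format, OF conjI[OF l d]] by blast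
        then show ?thesis unfolding Rel Orig sat.simps expd_simps eval_expd m .
      next
        case (Star R)
        have l: "length (map (eval A v) ts) = rarity L R" using a Rel Star by simp
        have "\<not> rels A R (map (eval A v) ts)" using a Rel Star by simp
        then have "\<not> rels B R (map h (map (eval A v) ts))" using rc[rule_format, OF conjI[OF l d]] by blast
        then show ?thesis unfolding Rel Star sat.simps expd_simps eval_expd m .
      next
        case StarEq
        then have l: "length ts = 2" using a Rel by simp
        then have "ts = [ts!0, ts!1]" by (rule len2)
        then obtain s t where ts: "ts = [s,t]" by metis
        then have "eval A v s \<noteq> eval A v t" using a Rel StarEq by simp
        moreover have "eval A v s \<in> Dom A" "eval A v t \<in> Dom A" using d ts by auto
        ultimately have "h (eval A v s) \<noteq> h (eval A v t)" using inj by (meson inj_on_contraD)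
        then show ?thesis using m Rel StarEq ts by simp
      qed
    next
      case (Eq s t)
      then have "wf_trm L s" "wf_trm L t" "eval A v s = eval A v t" using a by auto
      then show ?thesis using Eq ev[of s] ev[of t] by simp
    qed (use a in auto)
  qed
qed

lemma pmc_mc:
  fixes L :: "('f,'r) lang"
  assumes pmc: "pos_model_complete (star_lang L) (star_theory L T) TYPE('a)"
  shows "model_complete L T TYPE('a)"
  unfolding model_complete_def
proof (intro allI impI)
  fix A B :: "('a,'f,'r) struc" and h
  assume abh: "is_model L T A \<and> is_model L T B \<and> embedding L A B h"
  then have A: "is_model L T A" and B: "is_model L T B" and e: "embedding L A B h" by auto
  have hd: "\<forall>a\<in>Dom A. h a \<in> Dom B" using e by (simp add: embedding_def)
  have im: "immersion (star_lang L) (expd A) (expd B) h"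
    using pmc emb_hom[OF A e] model_expd[OF A] model_expd[OF B] unfolding pos_model_complete_def by blast
  show "ec_embedding L A B h"
    unfolding ec_embedding_def
  proof (intro conjI e allI impI)
    fix \<phi> v assume a: "wf_fm L \<phi> \<and> existential \<phi> \<and> asg A v \<and> sat B (h \<circ> v) \<phi>"
    then obtain xs \<psi> where \<phi>: "\<phi> = Exs xs \<psi>" "qfree \<psi>" unfolding existential_def by blast
    have "sat (expd B) (h \<circ> v) (pp \<phi>)" using a sat_pp by blast
    moreover have "pos_existential (pp \<phi>)" unfolding pos_existential_def \<phi> pp_Exs
      using qfree_pp \<phi>(2) by blast
    moreover have "wf_fm (star_lang L) (pp \<phi>)" using wf_pp a by blast
    ultimately have "sat (expd A) v (pp \<phi>)" using im a unfolding immersion_def by auto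
    then show "sat A v \<phi>" using sat_pp by blast
  qed
qed

primrec negS :: "'r starred \<Rightarrow> 'f trm list \<Rightarrow> ('f,'r starred) fm" where
  "negS (Orig R) ts = Rel (Star R) ts"
| "negS (Star R) ts = Rel (Orig R) ts"
| "negS StarEq ts = Eq (ts!0) (ts!1)"

primrec negat :: "('f,'r starred) fm \<Rightarrow> ('f,'r starred) fm" where
  "negat FT = FT" | "negat FF = FT"
| "negat (Rel S ts) = negS S ts"
| "negat (Eq s t) = Rel StarEq [s,t]"
| "negat (Neg \<phi>) = FT" | "negat (Conj a b) = FT" | "negat (Disj a b) = FT"
| "negat (Ex x \<phi>) = FT" | "negat (All x \<phi>) = FT"

lemma negat_pos: "pos_qfree (negat \<psi>)"
proof (cases \<psi>)
  case (Rel S ts) then show ?thesis by (cases S) simp_all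
qed simp_all

lemma negat_props:
  fixes L :: "('f,'r) lang"
  assumes B: "is_model (star_lang L) (star_theory L T) B" and w: "asg B w"
    and \<psi>: "wf_fm (star_lang L) \<psi>" "is_atomic \<psi>"
  shows "wf_fm (star_lang L) (negat \<psi>) \<and> (sat B w (negat \<psi>) \<longleftrightarrow> \<not> sat B w \<psi>)"
proof -
  have st: "is_struct L (red B)" using B by (simp add: is_model_def)
  have ed: "\<And>t. wf_trm L t \<Longrightarrow> eval B w t \<in> Dom B" using eval_dom[OF st, of w] w by simp
  show ?thesis
  proof (cases \<psi>)
    case (Rel S ts)
    have d: "set (map (eval B w) ts) \<subseteq> Dom B" using \<psi> Rel ed by auto
    show ?thesis
    proof (cases S)
      case (Orig R) then show ?thesis using \<psi> Rel d star_fact_rel[OF B, of "map (eval B w) ts" R] by auto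
    next
      case (Star R) then show ?thesis using \<psi> Rel d star_fact_rel[OF B, of "map (eval B w) ts" R] by auto
    next
      case StarEq
      then have l: "length ts = 2" using \<psi> Rel by simp
      then have "ts = [ts!0, ts!1]" by (rule len2)
      then obtain s t where ts: "ts = [s,t]" by metis
      then show ?thesis using \<psi> Rel StarEq d star_fact_eq[OF B, of "eval B w s" "eval B w t"] by auto
    qed
  next
    case (Eq s t)
    then show ?thesis using \<psi> ed star_fact_eq[OF B, of "eval B w s" "eval B w t"] by auto
  qed (use \<psi> in auto)
qed

lemma atomic_pos: "is_atomic a \<Longrightarrow> pos_qfree a"
  by (cases a) auto

lemma pos_qfree_Conjs: "\<forall>\<chi>\<in>set \<Phi>. wf_fm L \<chi> \<and> is_atomic \<chi> \<Longrightarrow> pos_qfree (Conjs \<Phi>)"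
proof (induction \<Phi>)
  case Nil then show ?case by (simp add: Conjs_def)
next
  case (Cons a \<Phi>) then show ?case using atomic_pos[of a] by (simp add: Conjs_def)
qed

definition botf :: "('f,'r starred) fm" where "botf = Rel StarEq [Var 0, Var 0]"

lemma botf_props:
  fixes L :: "('f,'r) lang"
  assumes B: "is_model (star_lang L) (star_theory L T) B" and w: "asg B w"
  shows "wf_fm (star_lang L) botf" "is_atomic botf" "\<not> sat B w botf"
  using star_fact_eq[OF B, of "w 0" "w 0"] w by (auto simp: botf_def asg_def)

fun dnf :: "('f,'r) fm \<Rightarrow> ('f,'r) fm list list" where
  "dnf FT = [[]]" | "dnf FF = []"
| "dnf (Rel R ts) = [[Rel R ts]]" | "dnf (Eq s t) = [[Eq s t]]"
| "dnf (Conj a b) = concat (map (\<lambda>x. map (\<lambda>y. x @ y) (dnf b)) (dnf a))"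
| "dnf (Disj a b) = dnf a @ dnf b"
| "dnf (Neg \<phi>) = []" | "dnf (Ex x \<phi>) = []" | "dnf (All x \<phi>) = []"

lemma dnf_sat: "pos_qfree \<phi> \<Longrightarrow> sat A w \<phi> \<longleftrightarrow> (\<exists>c\<in>set (dnf \<phi>). \<forall>\<chi>\<in>set c. sat A w \<chi>)"
proof (induction \<phi>)
  case (Conj a b)
  then show ?case by (auto 0 4)
qed auto

lemma dnf_wf: "pos_qfree \<phi> \<Longrightarrow> wf_fm L \<phi> \<Longrightarrow> c \<in> set (dnf \<phi>) \<Longrightarrow> \<chi> \<in> set c \<Longrightarrow> wf_fm L \<chi> \<and> is_atomic \<chi>"
proof (induction \<phi> arbitrary: c)
  case (Conj a b)
  from Conj.prems(3) obtain x y where xy: "x \<in> set (dnf a)" "y \<in> set (dnf b)" "c = x @ y" by auto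
  show ?case
  proof (cases "\<chi> \<in> set x")
    case True then show ?thesis using Conj.IH(1)[of x] Conj.prems xy by simp
  next
    case False then have "\<chi> \<in> set y" using xy Conj.prems(4) by simp
    then show ?thesis using Conj.IH(2)[of y] Conj.prems xy by simp
  qed
next
  case (Disj a b)
  then show ?case by auto
qed auto

lemma pmc_gc:
  fixes L :: "('f,'r) lang"
  assumes pmc: "pos_model_complete (star_lang L) (star_theory L T) TYPE('a)"
  shows "geom_complete (star_lang L) (star_theory L T) TYPE('a)"
  unfolding geom_complete_def
proof (intro allI impI)
  fix A B :: "('a,'f,'r starred) struc" and h
  assume abh: "is_model (star_lang L) (star_theory L T) A \<and> is_model (star_lang L) (star_theory L T) B \<and> hom (star_lang L) A B h"
  then have A: "is_model (star_lang L) (star_theory L T) A" and B: "is_model (star_lang L) (star_theory L T) B"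
    and h: "hom (star_lang L) A B h" by auto
  have hd: "\<forall>a\<in>Dom A. h a \<in> Dom B" using h by (simp add: hom_def)
  have im: "immersion (star_lang L) A B h" using pmc abh unfolding pos_model_complete_def by blast
  show "geom_closed (star_lang L) A B h"
    unfolding geom_closed_def
  proof (intro conjI h allI impI)
    fix ys \<Phi> \<psi> v
    assume a: "(\<forall>\<chi>\<in>set \<Phi>. wf_fm (star_lang L) \<chi> \<and> is_atomic \<chi>) \<and> wf_fm (star_lang L) \<psi> \<and> is_atomic \<psi> \<and> asg A v \<and>
        sat A v (Alls ys (Imp (Conjs \<Phi>) \<psi>))"
    show "sat B (h \<circ> v) (Alls ys (Imp (Conjs \<Phi>) \<psi>))"
    proof (rule ccontr)
      assume "\<not> ?thesis"
      then obtain w where w: "vari B ys (h \<circ> v) w" "\<forall>\<chi>\<in>set \<Phi>. sat B w \<chi>" "\<not> sat B w \<psi>"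
        unfolding sat_Alls by auto
      have asgB: "asg B (h \<circ> v)" using a hd by (auto simp: asg_def)
      have wB: "asg B w" using vari_asg[OF asgB w(1)] .
      let ?\<theta> = "Exs ys (Conj (Conjs \<Phi>) (negat \<psi>))"
      have np: "wf_fm (star_lang L) (negat \<psi>)" "sat B w (negat \<psi>)"
        using negat_props[OF B wB, of \<psi>] a w(3) by auto
      have "sat B w (Conj (Conjs \<Phi>) (negat \<psi>))" using w(2) np(2) by simp
      then have s1: "sat B (h \<circ> v) ?\<theta>" unfolding sat_Exs using w(1) by blast
      have s2: "wf_fm (star_lang L) ?\<theta>" using np(1) a by simp
      have pq1: "pos_qfree (Conjs \<Phi>)" using a pos_qfree_Conjs by blast
      have pq2: "pos_qfree (negat \<psi>)" by (rule negat_pos)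
      have s3: "pos_existential ?\<theta>" unfolding pos_existential_def
        by (rule exI[of _ ys], rule exI[of _ "Conj (Conjs \<Phi>) (negat \<psi>)"]) (simp add: pq1 pq2)
      have "sat A v ?\<theta>"
        using im[unfolded immersion_def, THEN conjunct2, rule_format, of ?\<theta> v] s1 s2 s3 a by blast
      then obtain u where u: "vari A ys v u" "sat A u (Conj (Conjs \<Phi>) (negat \<psi>))"
        unfolding sat_Exs by blast
      have uA: "asg A u" using vari_asg u(1) a by blast
      have "\<not> sat A u \<psi>" using negat_props[OF A uA, of \<psi>] a u(2) by simp
      moreover have "sat A u (Imp (Conjs \<Phi>) \<psi>)" using a u(1) unfolding sat_Alls by blast
      then have "sat A u \<psi>" using u(2) by simp
      ultimately show False by blast
    qed
  qed
qed

lemma gc_pmc: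
  fixes L :: "('f,'r) lang"
  assumes gc: "geom_complete (star_lang L) (star_theory L T) TYPE('a)"
  shows "pos_model_complete (star_lang L) (star_theory L T) TYPE('a)"
  unfolding pos_model_complete_def
proof (intro allI impI)
  fix A B :: "('a,'f,'r starred) struc" and h
  assume abh: "is_model (star_lang L) (star_theory L T) A \<and> is_model (star_lang L) (star_theory L T) B \<and> hom (star_lang L) A B h"
  then have A: "is_model (star_lang L) (star_theory L T) A" and B: "is_model (star_lang L) (star_theory L T) B"
    and h: "hom (star_lang L) A B h" by auto
  have hd: "\<forall>a\<in>Dom A. h a \<in> Dom B" using h by (simp add: hom_def)
  have g: "geom_closed (star_lang L) A B h" using gc abh unfolding geom_complete_def by blast
  show "immersion (star_lang L) A B h"
    unfolding immersion_def
  proof (intro conjI h allI impI)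
    fix \<phi> v assume a: "wf_fm (star_lang L) \<phi> \<and> pos_existential \<phi> \<and> asg A v \<and> sat B (h \<circ> v) \<phi>"
    then obtain xs \<psi> where \<phi>: "\<phi> = Exs xs \<psi>" "pos_qfree \<psi>" unfolding pos_existential_def by blast
    have wf\<psi>: "wf_fm (star_lang L) \<psi>" using a \<phi> by simp
    show "sat A v \<phi>"
    proof (rule ccontr)
      assume nA: "\<not> sat A v \<phi>"
      have asgB: "asg B (h \<circ> v)" using a hd by (auto simp: asg_def)
      have "sat B (h \<circ> v) (Exs xs \<psi>)" using a \<phi>(1) by simp
      then obtain w where w: "vari B xs (h \<circ> v) w" "sat B w \<psi>" unfolding sat_Exs by blast
      have wB: "asg B w" using vari_asg[OF asgB w(1)] .
      obtain c where c: "c \<in> set (dnf \<psi>)" "\<forall>\<chi>\<in>set c. sat B w \<chi>" using dnf_sat[OF \<phi>(2)] w by blast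
      have cwf: "\<forall>\<chi>\<in>set c. wf_fm (star_lang L) \<chi> \<and> is_atomic \<chi>" using dnf_wf[OF \<phi>(2) wf\<psi> c(1)] by blast
      have "sat A v (Alls xs (Imp (Conjs c) botf))"
        unfolding sat_Alls
      proof (intro allI impI)
        fix u assume u: "vari A xs v u"
        have nA': "\<not> sat A v (Exs xs \<psi>)" using nA \<phi>(1) by simp
        have "\<not> sat A u \<psi>" using nA' u unfolding sat_Exs by blast
        then have "\<not> (\<forall>\<chi>\<in>set c. sat A u \<chi>)" using dnf_sat[OF \<phi>(2)] c(1) by blast
        then show "sat A u (Imp (Conjs c) botf)" by auto
      qed
      moreover have "wf_fm (star_lang L) botf" "is_atomic botf" by (simp_all add: botf_def)
      ultimately have "sat B (h \<circ> v) (Alls xs (Imp (Conjs c) botf))"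
        using g[unfolded geom_closed_def, THEN conjunct2, rule_format, of c botf v xs] cwf a by blast
      then have "sat B w botf" using w(1) c(2) unfolding sat_Alls by auto
      then show False using botf_props[OF B wB] by blast
    qed
  qed
qed

theorem corollary4p22:
  fixes L :: "('f,'r) lang" and T :: "('f,'r) fm set"
  assumes "is_theory L T"
  shows "(model_complete L T TYPE('a) \<longleftrightarrow>
            pos_model_complete (star_lang L) (star_theory L T) TYPE('a))
       \<and> (pos_model_complete (star_lang L) (star_theory L T) TYPE('a) \<longleftrightarrow>
            geom_complete (star_lang L) (star_theory L T) TYPE('a))"
  using mc_pmc pmc_mc pmc_gc gc_pmc by blast

end
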